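(* Let $d\ge 2$. Let $A'_1,A'_2,A_1,A_2,\tilde A,B$ be quantum systems, each with Hilbert space $\mathbb{C}^d$, and let $\psi^+_{XY}$ denote the maximally entangled state $|\psi^+\rangle\langle\psi^+|$, $|\psi^+\rangle=\frac1{\sqrt d}\sum_{i=0}^{d-1}|ii\rangle$, on two such systems. Let $\rho_{\tilde AB}$ be an arbitrary state on $\tilde A B$, let $\{M^{(i)}\}_{i=1}^K$ (any $K\ge1$) be a POVM on $A_1A_2\tilde A$, and for each $i$ and $j\in\{1,2\}$ let $U^{(i,j)}_B$ be a unitary on $B$. Set $\Omega=\psi^+_{A'_1A_1}\otimes\psi^+_{A'_2A_2}\otimes\rho_{\tilde AB}$ and $$P_{\mathrm{succ}}=\frac12\sum_{j=1}^{2}\sum_{i=1}^{K}\operatorname{tr}\Big[\psi^+_{A'_jB}\,U^{(i,j)}_B\,\operatorname{tr}_{A_1A_2\tilde A A'_{\bar j}}\big[(M^{(i)}\otimes\mathbf 1)\,\Omega\big]\,U^{(i,j)\dagger}_B\Big],$$ where $\bar j$ denotes the index in $\{1,2\}$ different from $j$. Then $$P_{\mathrm{succ}}\le\frac{d+1}{2d}.$$ In particular, for $d=2$, $P_{\mathrm{succ}}\le 3/4$.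
   Context: This models the symmetric constrained-entanglement quantum random access code: Alice holds two $d$-dimensional inputs (purified by reference systems $A'_1,A'_2$), shares only a $d\times d$ state with Bob, may send unlimited classical communication (the outcome $i$ of her measurement), and Bob, depending on his uniformly random choice $j\in\{1,2\}$ and on $i$, applies a unitary aiming to reproduce input $j$; $P_{\mathrm{succ}}$ is the average entanglement fidelity of $B$ with $A'_j$. *)

theory Defs
  imports "HOL-Analysis.Analysis" "HOL-Library.Complex_Order" "HOL-Library.FuncSet"
begin

text \<open>Each quantum system has Hilbert space C^d with
 computational basis indexed by 0..d-1.  A basis vector of a set S of systems is a
 configuration f in PiE S (%_. {..<d}); an operator on S is given by its matrix
 entries X f g (only configurations in cfgs d S matter).\<close>

datatype sys = Ap1 | Ap2 | A1 | A2 | At | B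

type_synonym qop = "(sys \<Rightarrow> nat) \<Rightarrow> (sys \<Rightarrow> nat) \<Rightarrow> complex"

definition cfgs :: "nat \<Rightarrow> sys set \<Rightarrow> (sys \<Rightarrow> nat) set" where
  "cfgs d S = PiE S (\<lambda>_. {..<d})"

definition ident :: qop where
  "ident f g = (if f = g then 1 else 0)"

definition tensor :: "sys set \<Rightarrow> sys set \<Rightarrow> qop \<Rightarrow> qop \<Rightarrow> qop" where
  "tensor S T X Y = (\<lambda>f g. X (restrict f S) (restrict g S) * Y (restrict f T) (restrict g T))"

definition mult :: "nat \<Rightarrow> sys set \<Rightarrow> qop \<Rightarrow> qop \<Rightarrow> qop" where
  "mult d S X Y = (\<lambda>f g. \<Sum>h\<in>cfgs d S. X f h * Y h g)"

definition adj :: "qop \<Rightarrow> qop" where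
  "adj X = (\<lambda>f g. cnj (X g f))"

definition qtrace :: "nat \<Rightarrow> sys set \<Rightarrow> qop \<Rightarrow> complex" where
  "qtrace d S X = (\<Sum>f\<in>cfgs d S. X f f)"

definition ptrace :: "nat \<Rightarrow> sys set \<Rightarrow> qop \<Rightarrow> qop" where
  "ptrace d T X = (\<lambda>f g. \<Sum>h\<in>cfgs d T.
      X (\<lambda>x. if x \<in> T then h x else f x) (\<lambda>x. if x \<in> T then h x else g x))"

definition positive :: "nat \<Rightarrow> sys set \<Rightarrow> qop \<Rightarrow> bool" where
  "positive d S X \<longleftrightarrow>
     (\<forall>v :: (sys \<Rightarrow> nat) \<Rightarrow> complex.
        0 \<le> (\<Sum>f\<in>cfgs d S. \<Sum>g\<in>cfgs d S. cnj (v f) * X f g * v g))"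

definition density :: "nat \<Rightarrow> sys set \<Rightarrow> qop \<Rightarrow> bool" where
  "density d S X \<longleftrightarrow> positive d S X \<and> qtrace d S X = 1"

definition unitary_op :: "nat \<Rightarrow> sys set \<Rightarrow> qop \<Rightarrow> bool" where
  "unitary_op d S U \<longleftrightarrow>
     (\<forall>f\<in>cfgs d S. \<forall>g\<in>cfgs d S.
        mult d S U (adj U) f g = ident f g \<and> mult d S (adj U) U f g = ident f g)"

definition povm :: "nat \<Rightarrow> sys set \<Rightarrow> nat \<Rightarrow> (nat \<Rightarrow> qop) \<Rightarrow> bool" where
  "povm d S K M \<longleftrightarrow> (\<forall>i\<in>{1..K}. positive d S (M i)) \<and>
     (\<forall>f\<in>cfgs d S. \<forall>g\<in>cfgs d S. (\<Sum>i=1..K. M i f g) = ident f g)"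

text \<open>maximally entangled state |psi+><psi+| on systems X, Y,
  |psi+> = 1/sqrt d * sum_i |ii>\<close>
definition psi_plus :: "nat \<Rightarrow> sys \<Rightarrow> sys \<Rightarrow> qop" where
  "psi_plus d X Y = (\<lambda>f g. if f X = f Y \<and> g X = g Y then 1 / of_nat d else 0)"

definition Aprime :: "nat \<Rightarrow> sys" where
  "Aprime j = (if j = 1 then Ap1 else Ap2)"

definition Aprime_bar :: "nat \<Rightarrow> sys" where
  "Aprime_bar j = (if j = 1 then Ap2 else Ap1)"

definition Omega :: "nat \<Rightarrow> qop \<Rightarrow> qop" where
  "Omega d \<rho> = tensor {Ap1, A1, Ap2, A2} {At, B}
      (tensor {Ap1, A1} {Ap2, A2} (psi_plus d Ap1 A1) (psi_plus d Ap2 A2)) \<rho>"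

definition reduced :: "nat \<Rightarrow> qop \<Rightarrow> qop \<Rightarrow> nat \<Rightarrow> qop" where
  "reduced d \<rho> Mi j = ptrace d {A1, A2, At, Aprime_bar j}
      (mult d UNIV (tensor {A1, A2, At} {Ap1, Ap2, B} Mi ident) (Omega d \<rho>))"

definition P_succ :: "nat \<Rightarrow> qop \<Rightarrow> nat \<Rightarrow> (nat \<Rightarrow> qop) \<Rightarrow> (nat \<Rightarrow> nat \<Rightarrow> qop) \<Rightarrow> complex" where
  "P_succ d \<rho> K M U = 1/2 * (\<Sum>j\<in>{1,2::nat}. \<Sum>i=1..K.
      (let S = {Aprime j, B};
           UB = tensor {Aprime j} {B} ident (U i j)
       in qtrace d S (mult d S (psi_plus d (Aprime j) B)
             (mult d S (mult d S UB (reduced d \<rho> (M i) j)) (adj UB)))))"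

end

theory Submission
  imports Defs
begin


lemma sum_cfgs_insert:
  assumes "a \<notin> S"
  shows "(\<Sum>f\<in>cfgs d (insert a S). F f) = (\<Sum>x<d. \<Sum>g\<in>cfgs d S. F (g(a:=x)))"
proof -
  have "(\<Sum>f\<in>cfgs d (insert a S). F f) = (\<Sum>p\<in>{..<d} \<times> cfgs d S. F ((\<lambda>(y, g). g(a := y)) p))"
    unfolding cfgs_def PiE_insert_eq
    by (subst sum.reindex) (auto intro: inj_combinator[OF assms])
  also have "\<dots> = (\<Sum>x<d. \<Sum>g\<in>cfgs d S. F (g(a:=x)))"
    by (simp add: sum.cartesian_product split_beta)
  finally show ?thesis .
qed

lemma sum_cfgs_empty: "(\<Sum>f\<in>cfgs d {}. F f) = F (\<lambda>_. undefined)"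
  by (simp add: cfgs_def)

lemma cfgs_empty[simp]: "cfgs d {} = {\<lambda>_. undefined}"
  by (simp add: cfgs_def)

lemma if0_mult_left: "(if P then a else 0) * (b::complex) = (if P then a * b else 0)" by simp
lemma if0_mult_right: "(b::complex) * (if P then a else 0) = (if P then b * a else 0)" by simp
lemma if0_conj: "(if P \<and> Q then (a::complex) else 0) = (if P then if Q then a else 0 else 0)" by simp
lemma sum_if0_const: "(\<Sum>x\<in>S. if P then F x else (0::complex)) = (if P then (\<Sum>x\<in>S. F x) else 0)" by simp
lemma sum_delta_lt1: "(\<Sum>x<(d::nat). if x = a then F x else (0::complex)) = (if a < d then F a else 0)"
  using sum.delta[of "{..<d}" a F] by simp
lemma sum_delta_lt2: "(\<Sum>x<(d::nat). if a = x then F x else (0::complex)) = (if a < d then F a else 0)"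
  using sum.delta'[of "{..<d}" a F] by simp
lemma if0_div: "(if P then a else 0) / (b::complex) = (if P then a / b else 0)" by simp
lemma cnj_if0: "cnj (if P then a else b) = (if P then cnj a else cnj b)" by simp
lemmas delta_simps = cnj_if0 if0_div if0_mult_left if0_mult_right if0_conj sum_if0_const sum_delta_lt1 sum_delta_lt2

lemma UNIV_sys: "(UNIV::sys set) = {Ap1,Ap2,A1,A2,At,B}"
  using sys.exhaust by auto

definition mkB :: "nat \<Rightarrow> sys \<Rightarrow> nat" where "mkB b = restrict (\<lambda>_. b) {B}"
definition mkAB :: "nat \<Rightarrow> nat \<Rightarrow> sys \<Rightarrow> nat" where
  "mkAB t b = restrict (\<lambda>x. if x = At then t else b) {At,B}"
definition mkM :: "nat \<Rightarrow> nat \<Rightarrow> nat \<Rightarrow> sys \<Rightarrow> nat" where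
  "mkM a1 a2 t = restrict (\<lambda>x. if x = A1 then a1 else if x = A2 then a2 else t) {A1,A2,At}"

lemma restrict_B: "restrict f {B} = mkB (f B)"
  by (auto simp: mkB_def restrict_def fun_eq_iff)
lemma restrict_AB: "restrict f {At,B} = mkAB (f At) (f B)"
  by (auto simp: mkAB_def restrict_def fun_eq_iff)
lemma restrict_M: "restrict f {A1,A2,At} = mkM (f A1) (f A2) (f At)"
  by (auto simp: mkM_def restrict_def fun_eq_iff)
lemma restrict_eq_iff: "(restrict f S = restrict g S) = (\<forall>x\<in>S. f x = g x)"
  by (auto simp: restrict_def fun_eq_iff)

lemma Y_eq:
  shows "mult d UNIV (tensor {A1,A2,At} {Ap1,Ap2,B} Mi ident) (Omega d \<rho>) f g =
    (if f Ap1 < d \<and> f Ap2 < d \<and> f B < d \<and> g Ap1 = g A1 \<and> g Ap2 = g A2 then 1/(of_nat d)^2 * (\<Sum>t<d. Mi (mkM (f A1) (f A2) (f At)) (mkM (f Ap1) (f Ap2) t) * \<rho> (mkAB t (f B)) (mkAB (g At) (g B))) else 0)"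
  unfolding mult_def UNIV_sys
  apply (simp add: sum_cfgs_insert sum_cfgs_empty tensor_def ident_def Omega_def psi_plus_def restrict_AB restrict_M restrict_eq_iff fun_upd_apply)
  apply (simp add: delta_simps sum_divide_distrib power2_eq_square cong: if_cong)
  done

lemma red_eq1:
  assumes "f Ap1 < d" "g Ap1 < d" "f B < d"
  shows "reduced d \<rho> Mi 1 f g = 1/(of_nat d)^2 * (\<Sum>x<d. \<Sum>s<d. \<Sum>t<d.
     Mi (mkM (g Ap1) x s) (mkM (f Ap1) x t) * \<rho> (mkAB t (f B)) (mkAB s (g B)))"
  unfolding reduced_def ptrace_def Aprime_bar_def
  apply (simp add: sum_cfgs_insert fun_upd_apply Y_eq)
  apply (simp add: delta_simps assms sum_divide_distrib power2_eq_square cong: if_cong)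
  done


lemma red_eq2:
  assumes "f Ap2 < d" "g Ap2 < d" "f B < d"
  shows "reduced d \<rho> Mi 2 f g = 1/(of_nat d)^2 * (\<Sum>x<d. \<Sum>s<d. \<Sum>t<d.
     Mi (mkM x (g Ap2) s) (mkM x (f Ap2) t) * \<rho> (mkAB t (f B)) (mkAB s (g B)))"
  unfolding reduced_def ptrace_def Aprime_bar_def
  apply (simp add: sum_cfgs_insert fun_upd_apply Y_eq)
  apply (simp add: delta_simps assms sum_divide_distrib power2_eq_square cong: if_cong)
  done

lemma term1:
  "(let S = {Aprime 1, B}; UB = tensor {Aprime 1} {B} ident V in
    qtrace d S (mult d S (psi_plus d (Aprime 1) B) (mult d S (mult d S UB (reduced d \<rho> Mi 1)) (adj UB))))
   = 1/(of_nat d)^3 * (\<Sum>k<d. \<Sum>l<d. \<Sum>b'<d. \<Sum>b<d. \<Sum>a2<d. \<Sum>s<d. \<Sum>t<d.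
       V (mkB l) (mkB b) * cnj (V (mkB k) (mkB b')) * Mi (mkM k a2 s) (mkM l a2 t) * \<rho> (mkAB t b) (mkAB s b'))"
  unfolding Let_def Aprime_def qtrace_def mult_def adj_def
  apply (simp add: sum_cfgs_insert fun_upd_apply tensor_def psi_plus_def ident_def restrict_eq_iff restrict_B)
  apply (simp add: delta_simps red_eq1 red_eq1[unfolded One_nat_def] sum_divide_distrib power2_eq_square cong: if_cong)
  apply (simp add: sum_distrib_left sum_distrib_right sum_divide_distrib mult_ac power3_eq_cube)
  done

lemma term2:
  "(let S = {Aprime 2, B}; UB = tensor {Aprime 2} {B} ident V in
    qtrace d S (mult d S (psi_plus d (Aprime 2) B) (mult d S (mult d S UB (reduced d \<rho> Mi 2)) (adj UB))))
   = 1/(of_nat d)^3 * (\<Sum>k<d. \<Sum>l<d. \<Sum>b'<d. \<Sum>b<d. \<Sum>a1<d. \<Sum>s<d. \<Sum>t<d.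
       V (mkB l) (mkB b) * cnj (V (mkB k) (mkB b')) * Mi (mkM a1 k s) (mkM a1 l t) * \<rho> (mkAB t b) (mkAB s b'))"
  unfolding Let_def Aprime_def qtrace_def mult_def adj_def
  apply (simp add: sum_cfgs_insert fun_upd_apply tensor_def psi_plus_def ident_def restrict_eq_iff restrict_B)
  apply (simp add: delta_simps red_eq2 sum_divide_distrib power2_eq_square cong: if_cong)
  apply (simp add: sum_distrib_left sum_distrib_right sum_divide_distrib mult_ac power3_eq_cube)
  done


definition qf :: "'a set \<Rightarrow> ('a\<Rightarrow>'a\<Rightarrow>complex) \<Rightarrow> ('a\<Rightarrow>complex) \<Rightarrow> complex" where
  "qf I A v = (\<Sum>f\<in>I. \<Sum>g\<in>I. cnj (v f) * A f g * v g)"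

lemma qf_support:
  assumes "finite I" "J \<subseteq> I" "\<And>x. x \<notin> J \<Longrightarrow> v x = 0"
  shows "qf I A v = qf J A v"
proof -
  have "qf I A v = (\<Sum>f\<in>J. \<Sum>g\<in>I. cnj (v f) * A f g * v g)"
    unfolding qf_def by (rule sum.mono_neutral_right) (use assms in \<open>auto intro: finite_subset\<close>)
  also have "\<dots> = qf J A v"
    unfolding qf_def
    by (rule sum.cong[OF refl], rule sum.mono_neutral_right) (use assms in \<open>auto intro: finite_subset\<close>)
  finally show ?thesis .
qed

lemma cplx_nonneg: "0 \<le> (z::complex) \<Longrightarrow> Im z = 0 \<and> Re z \<ge> 0"
  by (simp add: less_eq_complex_def)

lemma psd_diag:
  assumes "finite I" "\<forall>v. 0 \<le> qf I A v" "f \<in> I"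
  shows "0 \<le> A f f"
proof -
  have "qf I A (\<lambda>x. if x = f then 1 else 0) = qf {f} A (\<lambda>x. if x = f then 1 else 0)"
    by (rule qf_support) (use assms in auto)
  then show ?thesis using assms(2)[rule_format, of "\<lambda>x. if x = f then 1 else 0"]
    by (simp add: qf_def)
qed

lemma psd_herm:
  assumes "finite I" "\<forall>v. 0 \<le> qf I A v" "f \<in> I" "g \<in> I"
  shows "A g f = cnj (A f g)"
proof (cases "f = g")
  case True
  then show ?thesis using psd_diag[OF assms(1,2,3)]
    by (simp add: less_eq_complex_def complex_eq_iff)
next
  case False
  define v1 where "v1 = (\<lambda>x. if x = f then 1 else if x = g then 1 else (0::complex))"
  define v2 where "v2 = (\<lambda>x. if x = f then 1 else if x = g then \<i> else (0::complex))"
  have "qf I A v1 = qf {f,g} A v1"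
    by (rule qf_support) (use assms in \<open>auto simp: v1_def\<close>)
  also have "\<dots> = A f f + A f g + A g f + A g g"
    using False by (simp add: qf_def v1_def)
  finally have 1: "0 \<le> A f f + A f g + A g f + A g g" using assms(2) by metis
  have "qf I A v2 = qf {f,g} A v2"
    by (rule qf_support) (use assms in \<open>auto simp: v2_def\<close>)
  also have "\<dots> = A f f + A f g * \<i> - \<i> * A g f + A g g"
    using False by (simp add: qf_def v2_def algebra_simps)
  finally have 2: "0 \<le> A f f + A f g * \<i> - \<i> * A g f + A g g" using assms(2) by metis
  have "0 \<le> A f f" "0 \<le> A g g" using psd_diag[OF assms(1,2)] assms(3,4) by auto
  with 1 2 show ?thesis
    by (auto simp: less_eq_complex_def complex_eq_iff)
qed

lemma psd_subset:
  assumes "finite I" "\<forall>v. 0 \<le> qf (insert p I) A v"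
  shows "\<forall>v. 0 \<le> qf I A v"
proof
  fix v
  let ?v = "\<lambda>x. if x \<in> I then v x else (0::complex)"
  have "qf I A v = qf I A ?v" unfolding qf_def by (intro sum.cong) auto
  also have "\<dots> = qf (insert p I) A ?v"
    by (rule qf_support[symmetric]) (use assms in auto)
  finally show "0 \<le> qf I A v" using assms(2) by simp
qed

lemma psd_zero_row:
  assumes "finite I" "\<forall>v. 0 \<le> qf I A v" "p \<in> I" "g \<in> I" "A p p = 0"
  shows "A p g = 0"
proof (rule ccontr)
  assume nz: "A p g \<noteq> 0"
  then have pg: "p \<noteq> g" using assms by auto
  define z where "z = A p g"
  have hz: "A g p = cnj z" using psd_herm[OF assms(1,2,3,4)] z_def by simp
  have agg: "0 \<le> A g g" using psd_diag[OF assms(1,2,4)] .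
  define t where "t = (Re (A g g) + 1) / (2 * (cmod z)^2)"
  have zpos: "cmod z > 0" using nz z_def by simp
  define r where "r = - (of_real t * z)"
  define v where "v = (\<lambda>x. if x = p then r else if x = g then 1 else (0::complex))"
  have "qf I A v = qf {p,g} A v"
    by (rule qf_support) (use assms in \<open>auto simp: v_def\<close>)
  also have "\<dots> = cnj r * z + A g p * r + A g g"
    using pg assms(5) by (simp add: qf_def v_def z_def algebra_simps)
  also have "\<dots> = A g g - of_real (2 * t) * (z * cnj z)"
    unfolding hz r_def by (simp add: algebra_simps)
  also have "\<dots> = A g g - of_real (2 * t * (cmod z)^2)"
    by (simp flip: complex_norm_square)
  also have "2 * t * (cmod z)^2 = Re (A g g) + 1"
    using zpos by (simp add: t_def)
  finally have "0 \<le> A g g - of_real (Re (A g g) + 1)" using assms(2) by metis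
  then show False using agg by (simp add: less_eq_complex_def)
qed

lemma psd_decomp:
  assumes "finite I" "\<forall>v. 0 \<le> qf I A v"
  shows "\<exists>(n::nat) W. \<forall>f\<in>I. \<forall>g\<in>I. A f g = (\<Sum>k<n. W k f * cnj (W k g))"
  using assms
proof (induction I arbitrary: A rule: finite_induct)
  case empty
  then show ?case by auto
next
  case (insert p I)
  let ?J = "insert p I"
  have fJ: "finite ?J" using insert by auto
  have app: "0 \<le> A p p" using psd_diag[OF fJ insert.prems] by simp
  have herm: "\<And>f g. f \<in> ?J \<Longrightarrow> g \<in> ?J \<Longrightarrow> A g f = cnj (A f g)"
    using psd_herm[OF fJ insert.prems] by blast
  have hermp: "\<And>f. f \<in> I \<Longrightarrow> A f p = cnj (A p f)"
    using herm by blast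
  show ?case
  proof (cases "A p p = 0")
    case True
    have row: "\<And>g. g \<in> ?J \<Longrightarrow> A p g = 0"
      using psd_zero_row[OF fJ insert.prems] True by blast
    have col: "\<And>g. g \<in> ?J \<Longrightarrow> A g p = 0"
      using row herm by (metis complex_cnj_zero insertI1)
    obtain n :: nat and W where W: "\<forall>f\<in>I. \<forall>g\<in>I. A f g = (\<Sum>k<n. W k f * cnj (W k g))"
      using insert.IH[OF psd_subset[OF insert.hyps(1) insert.prems]] by meson
    define W' where "W' = (\<lambda>k x. if x = p then 0 else W k x)"
    have "A f g = (\<Sum>k<n. W' k f * cnj (W' k g))" if "f \<in> ?J" "g \<in> ?J" for f g
    proof (cases "f = p \<or> g = p")
      case True
      then show ?thesis using row[OF that(2)] col[OF that(1)] by (auto simp: W'_def)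
    next
      case False
      then have "f \<in> I" "g \<in> I" using that by auto
      then show ?thesis using W False by (simp add: W'_def)
    qed
    then have "\<forall>f\<in>?J. \<forall>g\<in>?J. A f g = (\<Sum>k<n. W' k f * cnj (W' k g))" by blast
    then show ?thesis by blast
  next
    case False
    define ra where "ra = Re (A p p)"
    have a_eq: "A p p = of_real ra" using app by (simp add: ra_def less_eq_complex_def complex_eq_iff)
    have rapos: "ra > 0" using app False unfolding a_eq by (auto simp: less_eq_complex_def)
    define sa where "sa = sqrt ra"
    have sapos: "sa > 0" using rapos by (simp add: sa_def)
    have sasq: "sa * sa = ra" using rapos by (simp add: sa_def)
    define w where "w = (\<lambda>x. A x p / of_real sa)"
    define A' where "A' = (\<lambda>f g. A f g - w f * cnj (w g))"
    have psd': "\<forall>v. 0 \<le> qf I A' v"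
    proof
      fix v :: "'a \<Rightarrow> complex"
      define s where "s = (\<Sum>g\<in>I. A p g * v g)"
      define u where "u = (\<lambda>x. if x = p then - s / of_real ra else v x)"
      define Q where "Q = qf I A v"
      have sc: "(\<Sum>f\<in>I. cnj (v f) * A f p) = cnj s"
        unfolding s_def by (auto simp: cnj_sum hermp intro!: sum.cong)
      have uI: "\<And>x. x \<in> I \<Longrightarrow> u x = v x" using insert.hyps(2) by (auto simp: u_def)
      have "qf ?J A u = cnj (u p) * A p p * u p + cnj (u p) * (\<Sum>g\<in>I. A p g * v g)
          + (\<Sum>f\<in>I. cnj (v f) * A f p) * u p + Q"
      proof -
        have "qf ?J A u = (\<Sum>g\<in>?J. cnj (u p) * A p g * u g) + (\<Sum>f\<in>I. \<Sum>g\<in>?J. cnj (u f) * A f g * u g)"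
          unfolding qf_def using insert.hyps by simp
        also have "(\<Sum>g\<in>?J. cnj (u p) * A p g * u g) = cnj (u p) * A p p * u p + cnj (u p) * (\<Sum>g\<in>I. A p g * v g)"
          using insert.hyps uI by (simp add: sum_distrib_left mult.assoc)
        also have "(\<Sum>f\<in>I. \<Sum>g\<in>?J. cnj (u f) * A f g * u g) = (\<Sum>f\<in>I. cnj (v f) * A f p) * u p + Q"
          using insert.hyps uI by (simp add: Q_def qf_def sum.distrib sum_distrib_right)
        finally show ?thesis by (simp add: algebra_simps)
      qed
      also have "\<dots> = Q - s * cnj s / of_real ra"
        unfolding sc s_def[symmetric] a_eq using rapos
        by (simp add: u_def field_simps)
      finally have e1: "qf ?J A u = Q - s * cnj s / of_real ra" .
      have ws: "(\<Sum>g\<in>I. cnj (w g) * v g) = s / of_real sa"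
        unfolding s_def w_def
        by (auto simp: sum_divide_distrib hermp intro!: sum.cong)
      have wsc: "(\<Sum>f\<in>I. cnj (v f) * w f) = cnj s / of_real sa"
        unfolding w_def sc[symmetric] by (simp add: sum_divide_distrib)
      have "qf I A' v = Q - (\<Sum>f\<in>I. cnj (v f) * w f) * (\<Sum>g\<in>I. cnj (w g) * v g)"
        unfolding Q_def qf_def A'_def
        by (simp add: algebra_simps sum_subtractf sum_distrib_left sum_distrib_right)
      also have "\<dots> = Q - s * cnj s / of_real ra"
        unfolding ws wsc using sapos
        by (simp add: field_simps flip: sasq)
      finally have "qf I A' v = qf ?J A u" using e1 by simp
      then show "0 \<le> qf I A' v" using insert.prems by simp
    qed
    obtain n :: nat and W where W: "\<forall>f\<in>I. \<forall>g\<in>I. A' f g = (\<Sum>k<n. W k f * cnj (W k g))"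
      using insert.IH[OF psd'] by meson
    define W' where "W' = (\<lambda>k x. if k < n then (if x = p then 0 else W k x) else w x)"
    have wp: "w p * cnj (w p) = A p p" unfolding w_def a_eq using sapos
      by (simp add: field_simps flip: sasq)
    have key: "A f g = (\<Sum>k<Suc n. W' k f * cnj (W' k g))" if "f \<in> ?J" "g \<in> ?J" for f g
    proof -
      have "(\<Sum>k<Suc n. W' k f * cnj (W' k g)) = (\<Sum>k<n. W' k f * cnj (W' k g)) + w f * cnj (w g)"
        by (simp add: W'_def)
      also have "\<dots> = A f g"
      proof (cases "f = p \<or> g = p")
        case True
        then have z: "(\<Sum>k<n. W' k f * cnj (W' k g)) = 0" by (auto simp: W'_def)
        have "w f * cnj (w g) = A f g"
        proof (cases "f = p")
          case True
          have h: "cnj (A g p) = A p g" using herm[OF that(2), of p] by simp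
          have "w f * cnj (w g) = (A p p / of_real sa) * (cnj (A g p) / of_real sa)"
            using True by (simp add: w_def)
          also have "\<dots> = A p g" unfolding h a_eq using sapos
            by (simp add: field_simps flip: sasq)
          finally show ?thesis using True by simp
        next
          case False
          then have "g = p" using \<open>f = p \<or> g = p\<close> by simp
          have h: "cnj (A p f) = A f p" using herm[OF that(1), of p] by simp
          have "w f * cnj (w g) = (A f p / of_real sa) * (cnj (A p p) / of_real sa)"
            using \<open>g = p\<close> by (simp add: w_def)
          also have "\<dots> = A f p" unfolding a_eq using sapos
            by (simp add: field_simps flip: sasq)
          finally show ?thesis using \<open>g = p\<close> by simp
        qed
        then show ?thesis using z by simp
      next
        case False
        then have "f \<in> I" "g \<in> I" using that by auto
        then have "(\<Sum>k<n. W' k f * cnj (W' k g)) = A' f g" using W False by (simp add: W'_def)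
        then show ?thesis by (simp add: A'_def)
      qed
      finally show ?thesis by simp
    qed
    then show ?thesis by blast
  qed
qed


definition ipS :: "'a set \<Rightarrow> ('a \<Rightarrow> complex) \<Rightarrow> ('a \<Rightarrow> complex) \<Rightarrow> complex" where
  "ipS I u v = (\<Sum>i\<in>I. cnj (u i) * v i)"
definition nS :: "'a set \<Rightarrow> ('a \<Rightarrow> complex) \<Rightarrow> real" where
  "nS I u = (\<Sum>i\<in>I. (cmod (u i))^2)"

lemma nS_nonneg: "0 \<le> nS I u" unfolding nS_def by (simp add: sum_nonneg)

lemma ipS_self: "ipS I u u = of_real (nS I u)"
  unfolding ipS_def nS_def of_real_sum
proof (rule sum.cong)
  fix i show "cnj (u i) * u i = complex_of_real ((cmod (u i))\<^sup>2)"
    by (subst complex_norm_square) (simp add: mult.commute)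
qed simp

lemma CS_S: "cmod (ipS I u v) \<le> sqrt (nS I u) * sqrt (nS I v)"
proof -
  have "cmod (ipS I u v) \<le> (\<Sum>i\<in>I. cmod (u i) * cmod (v i))"
    unfolding ipS_def by (rule order_trans[OF norm_sum]) (simp add: norm_mult)
  also have "\<dots> \<le> sqrt (nS I u) * sqrt (nS I v)"
  proof -
    have "(\<Sum>i\<in>I. cmod (u i) * cmod (v i))^2 \<le> nS I u * nS I v"
      unfolding nS_def by (rule Cauchy_Schwarz_ineq_sum)
    then have "(\<Sum>i\<in>I. cmod (u i) * cmod (v i)) \<le> sqrt (nS I u * nS I v)"
      by (simp add: real_le_rsqrt)
    then show ?thesis by (simp add: real_sqrt_mult)
  qed
  finally show ?thesis .
qed

lemma nS_add: "nS I (\<lambda>i. u i + v i) = nS I u + nS I v + 2 * Re (ipS I u v)"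
proof -
  have "of_real (nS I (\<lambda>i. u i + v i)) = ipS I (\<lambda>i. u i + v i) (\<lambda>i. u i + v i)"
    by (simp add: ipS_self)
  also have "\<dots> = ipS I u u + ipS I v v + (ipS I u v + cnj (ipS I u v))"
    unfolding ipS_def by (simp add: algebra_simps sum.distrib cnj_sum)
  also have "ipS I u v + cnj (ipS I u v) = of_real (2 * Re (ipS I u v))"
    by (simp add: complex_add_cnj)
  finally have "complex_of_real (nS I (\<lambda>i. u i + v i)) = of_real (nS I u + nS I v + 2 * Re (ipS I u v))"
    by (simp add: ipS_self)
  then show ?thesis using of_real_eq_iff by blast
qed

lemma ipS_add: "ipS I (\<lambda>i. u i + v i) w = ipS I u w + ipS I v w"
  unfolding ipS_def by (simp add: algebra_simps sum.distrib)

lemma sum3: "(\<Sum>p\<in>{..<(d::nat)}\<times>{..<d}\<times>{..<d}. F p) = (\<Sum>a<d. \<Sum>b<d. \<Sum>c<d. F (a,b,c))"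
  by (simp add: sum.cartesian_product split_def)

lemma cmod_sq_eq: "complex_of_real ((cmod z)^2) = z * cnj z"
  by (rule complex_norm_square)

lemma row_norm:
  assumes "(\<Sum>b<(d::nat). V k b * cnj (V k b)) = 1"
  shows "(\<Sum>b<d. (cmod (V k b))^2) = 1"
proof -
  have "complex_of_real (\<Sum>b<d. (cmod (V k b))^2) = 1"
    unfolding of_real_sum cmod_sq_eq using assms by simp
  then show ?thesis by (metis of_real_eq_1_iff)
qed

lemma col_norm:
  assumes "(\<Sum>x<(d::nat). cnj (W x b) * W x b) = 1"
  shows "(\<Sum>x<d. (cmod (W x b))^2) = 1"
proof -
  have "complex_of_real (\<Sum>x<d. (cmod (W x b))^2) = 1"
    unfolding of_real_sum cmod_sq_eq using assms by (simp add: mult.commute)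
  then show ?thesis by (metis of_real_eq_1_iff)
qed

lemma monogamy:
  fixes V W :: "nat \<Rightarrow> nat \<Rightarrow> complex" and c :: "nat \<Rightarrow> nat \<Rightarrow> nat \<Rightarrow> complex" and d :: nat
  assumes VV: "\<And>k l. k < d \<Longrightarrow> l < d \<Longrightarrow> (\<Sum>b<d. V k b * cnj (V l b)) = (if k = l then 1 else 0)"
    and WW: "\<And>b b'. b < d \<Longrightarrow> b' < d \<Longrightarrow> (\<Sum>x<d. cnj (W x b) * W x b') = (if b = b' then 1 else 0)"
  shows "(\<Sum>x<d. (cmod (\<Sum>l<d. \<Sum>b<d. V l b * c l x b))^2)
       + (\<Sum>x<d. (cmod (\<Sum>l<d. \<Sum>b<d. W l b * c x l b))^2)
     \<le> (real d + 1) * (\<Sum>a1<d. \<Sum>a2<d. \<Sum>b<d. (cmod (c a1 a2 b))^2)"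
proof -
  define D where "D = {..<d}"
  define D3 where "D3 = D \<times> D \<times> D"
  define \<alpha> where "\<alpha> = (\<lambda>x. \<Sum>l<d. \<Sum>b<d. V l b * c l x b)"
  define \<beta> where "\<beta> = (\<lambda>y. \<Sum>l<d. \<Sum>b<d. W l b * c y l b)"
  define G where "G = (\<lambda>y x. \<Sum>b<d. V y b * cnj (W x b))"
  define \<gamma> where "\<gamma> = (\<lambda>x. \<Sum>y<d. \<beta> y * G y x)"
  define r where "r = (\<lambda>(k,x,b). \<alpha> x * cnj (V k b))"
  define q where "q = (\<lambda>(y,k,b). \<beta> y * cnj (W k b))"
  define cc where "cc = (\<lambda>(a1,a2,b). c a1 a2 b)"
  define A where "A = nS D \<alpha>"
  define B where "B = nS D \<beta>"
  define N where "N = nS D3 cc"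
  have A0: "A \<ge> 0" "B \<ge> 0" "N \<ge> 0" unfolding A_def B_def N_def by (auto simp: nS_nonneg)
  have hV: "(\<Sum>k<d. \<Sum>b<d. (cmod (V k b))^2) = real d"
  proof -
    have "(\<Sum>k<d. \<Sum>b<d. (cmod (V k b))^2) = (\<Sum>k<d. 1)"
      by (rule sum.cong) (auto intro!: row_norm simp: VV)
    then show ?thesis by simp
  qed
  have hW: "(\<Sum>k<d. \<Sum>b<d. (cmod (W k b))^2) = real d"
  proof -
    have "(\<Sum>k<d. \<Sum>b<d. (cmod (W k b))^2) = (\<Sum>b<d. \<Sum>k<d. (cmod (W k b))^2)"
      by (rule sum.swap)
    also have "\<dots> = (\<Sum>k<d. 1)"
      by (rule sum.cong) (auto intro!: col_norm simp: WW)
    also have "\<dots> = real d" by simp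
    finally show ?thesis .
  qed
  have F1: "ipS D3 r cc = of_real A"
  proof -
    have "ipS D3 r cc = (\<Sum>k<d. \<Sum>x<d. \<Sum>b<d. cnj (\<alpha> x) * (V k b * c k x b))"
      unfolding ipS_def D3_def D_def sum3 by (simp add: r_def cc_def mult_ac)
    also have "\<dots> = (\<Sum>x<d. \<Sum>k<d. \<Sum>b<d. cnj (\<alpha> x) * (V k b * c k x b))"
      by (rule sum.swap)
    also have "\<dots> = ipS D \<alpha> \<alpha>"
      unfolding ipS_def D_def \<alpha>_def by (simp add: sum_distrib_left)
    finally show ?thesis by (simp add: ipS_self A_def)
  qed
  have F2: "ipS D3 q cc = of_real B"
  proof -
    have "ipS D3 q cc = (\<Sum>y<d. \<Sum>k<d. \<Sum>b<d. cnj (\<beta> y) * (W k b * c y k b))"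
      unfolding ipS_def D3_def D_def sum3 by (simp add: q_def cc_def mult_ac)
    also have "\<dots> = ipS D \<beta> \<beta>"
      unfolding ipS_def D_def \<beta>_def by (simp add: sum_distrib_left)
    finally show ?thesis by (simp add: ipS_self B_def)
  qed
  have F3: "ipS D3 r q = ipS D \<alpha> \<gamma>"
  proof -
    have "ipS D3 r q = (\<Sum>y<d. \<Sum>x<d. \<Sum>b<d. cnj (\<alpha> x) * (\<beta> y * (V y b * cnj (W x b))))"
      unfolding ipS_def D3_def D_def sum3 by (simp add: r_def q_def mult_ac)
    also have "\<dots> = (\<Sum>x<d. \<Sum>y<d. \<Sum>b<d. cnj (\<alpha> x) * (\<beta> y * (V y b * cnj (W x b))))"
      by (rule sum.swap)
    also have "\<dots> = ipS D \<alpha> \<gamma>"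
      unfolding ipS_def D_def \<gamma>_def G_def by (simp add: sum_distrib_left)
    finally show ?thesis .
  qed
  have F4: "nS D3 r = real d * A"
  proof -
    have "nS D3 r = (\<Sum>k<d. \<Sum>x<d. \<Sum>b<d. (cmod (\<alpha> x))^2 * (cmod (V k b))^2)"
      unfolding nS_def D3_def D_def sum3 by (simp add: r_def norm_mult power_mult_distrib)
    also have "\<dots> = (\<Sum>x<d. \<Sum>k<d. \<Sum>b<d. (cmod (\<alpha> x))^2 * (cmod (V k b))^2)"
      by (rule sum.swap)
    also have "\<dots> = (\<Sum>x<d. (cmod (\<alpha> x))^2 * (\<Sum>k<d. \<Sum>b<d. (cmod (V k b))^2))"
      by (simp add: sum_distrib_left)
    also have "\<dots> = real d * A" unfolding hV A_def nS_def D_def by (simp add: sum_distrib_left mult_ac)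
    finally show ?thesis .
  qed
  have F5: "nS D3 q = real d * B"
  proof -
    have "nS D3 q = (\<Sum>y<d. \<Sum>k<d. \<Sum>b<d. (cmod (\<beta> y))^2 * (cmod (W k b))^2)"
      unfolding nS_def D3_def D_def sum3 by (simp add: q_def norm_mult power_mult_distrib)
    also have "\<dots> = (\<Sum>y<d. (cmod (\<beta> y))^2 * (\<Sum>k<d. \<Sum>b<d. (cmod (W k b))^2))"
      by (simp add: sum_distrib_left)
    also have "\<dots> = real d * B" unfolding hW B_def nS_def D_def by (simp add: sum_distrib_left mult_ac)
    finally show ?thesis .
  qed
  have GG: "(\<Sum>x<d. G y x * cnj (G y' x)) = (if y = y' then 1 else 0)" if "y < d" "y' < d" for y y'
  proof -
    have "(\<Sum>x<d. G y x * cnj (G y' x)) = (\<Sum>x<d. \<Sum>b<d. \<Sum>b'<d. V y b * cnj (V y' b') * (cnj (W x b) * W x b'))"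
      unfolding G_def by (simp add: sum_product cnj_sum mult_ac)
    also have "\<dots> = (\<Sum>b<d. \<Sum>x<d. \<Sum>b'<d. V y b * cnj (V y' b') * (cnj (W x b) * W x b'))"
      by (rule sum.swap)
    also have "\<dots> = (\<Sum>b<d. \<Sum>b'<d. \<Sum>x<d. V y b * cnj (V y' b') * (cnj (W x b) * W x b'))"
      by (rule sum.cong[OF refl], rule sum.swap)
    also have "\<dots> = (\<Sum>b<d. \<Sum>b'<d. V y b * cnj (V y' b') * (if b = b' then 1 else 0))"
      by (simp add: WW flip: sum_distrib_left)
    also have "\<dots> = (\<Sum>b<d. V y b * cnj (V y' b))"
      by (simp add: if_distrib cong: if_cong)
    also have "\<dots> = (if y = y' then 1 else 0)" using VV that by simp
    finally show ?thesis .
  qed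
  have F6: "nS D \<gamma> = B"
  proof -
    have "complex_of_real (nS D \<gamma>) = (\<Sum>x<d. \<gamma> x * cnj (\<gamma> x))"
      unfolding nS_def D_def of_real_sum cmod_sq_eq ..
    also have "\<dots> = (\<Sum>x<d. \<Sum>y<d. \<Sum>y'<d. \<beta> y * cnj (\<beta> y') * (G y x * cnj (G y' x)))"
      unfolding \<gamma>_def by (simp add: sum_product cnj_sum mult_ac)
    also have "\<dots> = (\<Sum>y<d. \<Sum>x<d. \<Sum>y'<d. \<beta> y * cnj (\<beta> y') * (G y x * cnj (G y' x)))"
      by (rule sum.swap)
    also have "\<dots> = (\<Sum>y<d. \<Sum>y'<d. \<Sum>x<d. \<beta> y * cnj (\<beta> y') * (G y x * cnj (G y' x)))"
      by (rule sum.cong[OF refl], rule sum.swap)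
    also have "\<dots> = (\<Sum>y<d. \<Sum>y'<d. \<beta> y * cnj (\<beta> y') * (if y = y' then 1 else 0))"
      by (simp add: GG flip: sum_distrib_left)
    also have "\<dots> = (\<Sum>y<d. \<beta> y * cnj (\<beta> y))"
      by (simp add: if_distrib cong: if_cong)
    also have "\<dots> = complex_of_real B"
      unfolding B_def nS_def D_def of_real_sum cmod_sq_eq ..
    finally show ?thesis by (metis of_real_eq_iff)
  qed
  define S where "S = A + B"
  have S0: "S \<ge> 0" using A0 by (simp add: S_def)
  have sumrq: "ipS D3 (\<lambda>i. r i + q i) cc = of_real S"
    by (simp add: ipS_add F1 F2 S_def)
  have nrq: "nS D3 (\<lambda>i. r i + q i) \<le> (real d + 1) * S"
  proof -
    have "Re (ipS D3 r q) \<le> cmod (ipS D \<alpha> \<gamma>)" unfolding F3 by (rule complex_Re_le_cmod)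
    also have "\<dots> \<le> sqrt A * sqrt B" using CS_S[of D \<alpha> \<gamma>] F6 by (simp add: A_def)
    finally have 1: "Re (ipS D3 r q) \<le> sqrt A * sqrt B" .
    have 2: "2 * (sqrt A * sqrt B) \<le> A + B"
    proof -
      have "0 \<le> (sqrt A - sqrt B)^2" by simp
      then show ?thesis using A0 by (simp add: power2_eq_square algebra_simps)
    qed
    show ?thesis unfolding nS_add F4 F5 using 1 2 by (simp add: S_def algebra_simps)
  qed
  have "S \<le> sqrt (nS D3 (\<lambda>i. r i + q i)) * sqrt N"
    using CS_S[of D3 "\<lambda>i. r i + q i" cc] sumrq S0 by (simp add: N_def)
  also have "\<dots> \<le> sqrt ((real d + 1) * S) * sqrt N"
    using nrq A0 by (intro mult_right_mono real_sqrt_le_mono) auto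
  finally have SS: "S \<le> sqrt ((real d + 1) * S * N)" by (simp add: real_sqrt_mult)
  have main: "S \<le> (real d + 1) * N"
  proof (cases "S = 0")
    case True then show ?thesis using A0 by simp
  next
    case False
    then have Sp: "S > 0" using S0 by simp
    have "S^2 \<le> (real d + 1) * S * N"
    proof -
      have "0 \<le> (real d + 1) * S * N" using S0 A0 by simp
      moreover have "S^2 \<le> (sqrt ((real d + 1) * S * N))^2"
        using SS S0 by (intro power_mono) auto
      ultimately show ?thesis by simp
    qed
    then have "S * S \<le> ((real d + 1) * N) * S" by (simp add: power2_eq_square mult_ac)
    then show ?thesis using Sp by simp
  qed
  have lhs: "(\<Sum>x<d. (cmod (\<Sum>l<d. \<Sum>b<d. V l b * c l x b))^2)
       + (\<Sum>x<d. (cmod (\<Sum>l<d. \<Sum>b<d. W l b * c x l b))^2) = S"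
    unfolding S_def A_def B_def nS_def D_def \<alpha>_def \<beta>_def ..
  have rhs: "(\<Sum>a1<d. \<Sum>a2<d. \<Sum>b<d. (cmod (c a1 a2 b))^2) = N"
    unfolding N_def nS_def D3_def D_def sum3 by (simp add: cc_def)
  show ?thesis unfolding lhs rhs by (rule main)
qed


lemma perm9:
  fixes F :: "nat \<Rightarrow> nat \<Rightarrow> nat \<Rightarrow> nat \<Rightarrow> nat \<Rightarrow> nat \<Rightarrow> nat \<Rightarrow> nat \<Rightarrow> nat \<Rightarrow> 'a::comm_monoid_add"
  shows "(\<Sum>k\<in>D. \<Sum>l\<in>D. \<Sum>b'\<in>D. \<Sum>b\<in>D. \<Sum>a\<in>D. \<Sum>s\<in>D. \<Sum>t\<in>D. \<Sum>n\<in>N. \<Sum>m\<in>M. F k l b' b a s t n m)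
       = (\<Sum>n\<in>N. \<Sum>m\<in>M. \<Sum>a\<in>D. \<Sum>k\<in>D. \<Sum>l\<in>D. \<Sum>b'\<in>D. \<Sum>b\<in>D. \<Sum>s\<in>D. \<Sum>t\<in>D. F k l b' b a s t n m)"
  apply (simp add: sum.cartesian_product)
  apply (rule sum.reindex_bij_witness[where i="\<lambda>(n,m,a,k,l,b',b,s,t). (k,l,b',b,a,s,t,n,m)"
        and j="\<lambda>(k,l,b',b,a,s,t,n,m). (n,m,a,k,l,b',b,s,t)"])
  apply auto
  done


lemma perm7:
  fixes F :: "nat \<Rightarrow> nat \<Rightarrow> nat \<Rightarrow> nat \<Rightarrow> nat \<Rightarrow> nat \<Rightarrow> nat \<Rightarrow> 'a::comm_monoid_add"
  shows "(\<Sum>a1\<in>D. \<Sum>a2\<in>D. \<Sum>b\<in>D. \<Sum>s\<in>D. \<Sum>t\<in>D. \<Sum>n\<in>N. \<Sum>m\<in>M. F a1 a2 b s t n m)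
       = (\<Sum>n\<in>N. \<Sum>m\<in>M. \<Sum>a1\<in>D. \<Sum>a2\<in>D. \<Sum>b\<in>D. \<Sum>s\<in>D. \<Sum>t\<in>D. F a1 a2 b s t n m)"
  apply (simp add: sum.cartesian_product)
  apply (rule sum.reindex_bij_witness[where i="\<lambda>(n,m,a1,a2,b,s,t). (a1,a2,b,s,t,n,m)"
        and j="\<lambda>(a1,a2,b,s,t,n,m). (n,m,a1,a2,b,s,t)"])
  apply auto
  done

lemma mkB_in: "k < d \<Longrightarrow> mkB k \<in> cfgs d {B}"
  by (auto simp: mkB_def cfgs_def)
lemma mkAB_in: "t < d \<Longrightarrow> b < d \<Longrightarrow> mkAB t b \<in> cfgs d {At,B}"
  by (auto simp: mkAB_def cfgs_def)
lemma mkM_in: "a1 < d \<Longrightarrow> a2 < d \<Longrightarrow> t < d \<Longrightarrow> mkM a1 a2 t \<in> cfgs d {A1,A2,At}"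
  by (auto simp: mkM_def cfgs_def)
lemma mkB_eq_iff: "mkB k = mkB l \<longleftrightarrow> k = l"
  by (auto simp: mkB_def restrict_def fun_eq_iff)
lemma mkM_eq_iff: "mkM a1 a2 t = mkM a1' a2' t' \<longleftrightarrow> a1 = a1' \<and> a2 = a2' \<and> t = t'"
  by (auto simp: mkM_def restrict_def fun_eq_iff)
lemma upd_mkB: "(\<lambda>_. undefined)(B := b) = mkB b"
  by (auto simp: mkB_def restrict_def fun_eq_iff)
lemma upd_mkAB: "(\<lambda>_. undefined)(B := b, At := t) = mkAB t b"
  by (auto simp: mkAB_def restrict_def fun_eq_iff)
lemma finite_cfgs: "finite (cfgs d S)"
proof -
  have fU: "finite (UNIV::sys set)" by (simp add: UNIV_sys)
  have "finite S" by (rule finite_subset[OF subset_UNIV fU])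
  then show ?thesis by (simp add: cfgs_def finite_PiE)
qed

lemma unit_rows:
  assumes "unitary_op d {B} V" "k < d" "l < d"
  shows "(\<Sum>b<d. V (mkB k) (mkB b) * cnj (V (mkB l) (mkB b))) = (if k = l then 1 else 0)"
proof -
  have "mult d {B} V (adj V) (mkB k) (mkB l) = ident (mkB k) (mkB l)"
    using assms by (auto simp: unitary_op_def intro: mkB_in)
  then show ?thesis
    by (simp add: mult_def adj_def ident_def sum_cfgs_insert[where S="{}", simplified] upd_mkB mkB_eq_iff)
qed

lemma unit_cols:
  assumes "unitary_op d {B} V" "k < d" "l < d"
  shows "(\<Sum>x<d. cnj (V (mkB x) (mkB k)) * V (mkB x) (mkB l)) = (if k = l then 1 else 0)"
proof -
  have "mult d {B} (adj V) V (mkB k) (mkB l) = ident (mkB k) (mkB l)"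
    using assms by (auto simp: unitary_op_def intro: mkB_in)
  then show ?thesis
    by (simp add: mult_def adj_def ident_def sum_cfgs_insert[where S="{}", simplified] upd_mkB mkB_eq_iff)
qed

lemma per_i:
  fixes Mi \<rho> V1 V2 :: qop and d :: nat
  assumes d0: "d > 0" and pM: "positive d {A1,A2,At} Mi" and pR: "positive d {At,B} \<rho>"
    and u1: "unitary_op d {B} V1" and u2: "unitary_op d {B} V2"
  shows "1/(of_nat d)^3 * (\<Sum>k<d. \<Sum>l<d. \<Sum>b'<d. \<Sum>b<d. \<Sum>a2<d. \<Sum>s<d. \<Sum>t<d.
       V1 (mkB l) (mkB b) * cnj (V1 (mkB k) (mkB b')) * Mi (mkM k a2 s) (mkM l a2 t) * \<rho> (mkAB t b) (mkAB s b'))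
   + 1/(of_nat d)^3 * (\<Sum>k<d. \<Sum>l<d. \<Sum>b'<d. \<Sum>b<d. \<Sum>a1<d. \<Sum>s<d. \<Sum>t<d.
       V2 (mkB l) (mkB b) * cnj (V2 (mkB k) (mkB b')) * Mi (mkM a1 k s) (mkM a1 l t) * \<rho> (mkAB t b) (mkAB s b'))
   \<le> (of_nat d + 1) / (of_nat d)^3 * (\<Sum>a1<d. \<Sum>a2<d. \<Sum>b<d. \<Sum>s<d. \<Sum>t<d.
       Mi (mkM a1 a2 s) (mkM a1 a2 t) * \<rho> (mkAB t b) (mkAB s b))"
proof -
  have "\<forall>v. 0 \<le> qf (cfgs d {A1,A2,At}) Mi v" using pM by (simp add: positive_def qf_def)
  from psd_decomp[OF finite_cfgs this] obtain n1 :: nat and Wm where Wm: "\<forall>f\<in>cfgs d {A1,A2,At}. \<forall>g\<in>cfgs d {A1,A2,At}. Mi f g = (\<Sum>k<n1. Wm k f * cnj (Wm k g))"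
    by blast
  have "\<forall>v. 0 \<le> qf (cfgs d {At,B}) \<rho> v" using pR by (simp add: positive_def qf_def)
  from psd_decomp[OF finite_cfgs this] obtain n2 :: nat and Ph where Ph: "\<forall>f\<in>cfgs d {At,B}. \<forall>g\<in>cfgs d {At,B}. \<rho> f g = (\<Sum>k<n2. Ph k f * cnj (Ph k g))"
    by blast
  define w where "w = (\<lambda>nn a1 a2 t. Wm nn (mkM a1 a2 t))"
  define ph where "ph = (\<lambda>mm t b. Ph mm (mkAB t b))"
  define c where "c = (\<lambda>nn mm a1 a2 b. \<Sum>t<d. cnj (w nn a1 a2 t) * ph mm t b)"
  define V1' where "V1' = (\<lambda>k b. V1 (mkB k) (mkB b))"
  define V2' where "V2' = (\<lambda>k b. V2 (mkB k) (mkB b))"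
  have Md: "Mi (mkM a1 a2 t) (mkM a1' a2' t') = (\<Sum>nn<n1. w nn a1 a2 t * cnj (w nn a1' a2' t'))"
    if "a1<d" "a2<d" "t<d" "a1'<d" "a2'<d" "t'<d" for a1 a2 t a1' a2' t'
    using Wm mkM_in that by (simp add: w_def)
  have Rd: "\<rho> (mkAB t b) (mkAB t' b') = (\<Sum>mm<n2. ph mm t b * cnj (ph mm t' b'))"
    if "t<d" "b<d" "t'<d" "b'<d" for t b t' b'
    using Ph mkAB_in that by (simp add: ph_def)
  have E1: "(\<Sum>k<d. \<Sum>l<d. \<Sum>b'<d. \<Sum>b<d. \<Sum>a2<d. \<Sum>s<d. \<Sum>t<d.
       V1 (mkB l) (mkB b) * cnj (V1 (mkB k) (mkB b')) * Mi (mkM k a2 s) (mkM l a2 t) * \<rho> (mkAB t b) (mkAB s b'))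
     = of_real (\<Sum>nn<n1. \<Sum>mm<n2. \<Sum>x<d. (cmod (\<Sum>l<d. \<Sum>b<d. V1' l b * c nn mm l x b))^2)"
  proof -
    have "(\<Sum>k<d. \<Sum>l<d. \<Sum>b'<d. \<Sum>b<d. \<Sum>a2<d. \<Sum>s<d. \<Sum>t<d.
       V1 (mkB l) (mkB b) * cnj (V1 (mkB k) (mkB b')) * Mi (mkM k a2 s) (mkM l a2 t) * \<rho> (mkAB t b) (mkAB s b'))
      = (\<Sum>k<d. \<Sum>l<d. \<Sum>b'<d. \<Sum>b<d. \<Sum>a2<d. \<Sum>s<d. \<Sum>t<d. \<Sum>nn<n1. \<Sum>mm<n2.
         V1' l b * cnj (V1' k b') * (w nn k a2 s * cnj (w nn l a2 t)) * (ph mm t b * cnj (ph mm s b')))"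
      by (simp add: Md Rd V1'_def sum_distrib_left sum_distrib_right mult_ac)
    also have "\<dots> = (\<Sum>nn<n1. \<Sum>mm<n2. \<Sum>a2<d. \<Sum>k<d. \<Sum>l<d. \<Sum>b'<d. \<Sum>b<d. \<Sum>s<d. \<Sum>t<d.
         V1' l b * cnj (V1' k b') * (w nn k a2 s * cnj (w nn l a2 t)) * (ph mm t b * cnj (ph mm s b')))"
      by (rule perm9)
    also have "\<dots> = (\<Sum>nn<n1. \<Sum>mm<n2. \<Sum>x<d. (\<Sum>l<d. \<Sum>b<d. V1' l b * c nn mm l x b) * cnj (\<Sum>l<d. \<Sum>b<d. V1' l b * c nn mm l x b))"
      by (simp add: c_def sum_distrib_left sum_distrib_right cnj_sum mult_ac)
    also have "\<dots> = of_real (\<Sum>nn<n1. \<Sum>mm<n2. \<Sum>x<d. (cmod (\<Sum>l<d. \<Sum>b<d. V1' l b * c nn mm l x b))^2)"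
      unfolding of_real_sum cmod_sq_eq ..
    finally show ?thesis .
  qed
  have E2: "(\<Sum>k<d. \<Sum>l<d. \<Sum>b'<d. \<Sum>b<d. \<Sum>a1<d. \<Sum>s<d. \<Sum>t<d.
       V2 (mkB l) (mkB b) * cnj (V2 (mkB k) (mkB b')) * Mi (mkM a1 k s) (mkM a1 l t) * \<rho> (mkAB t b) (mkAB s b'))
     = of_real (\<Sum>nn<n1. \<Sum>mm<n2. \<Sum>x<d. (cmod (\<Sum>l<d. \<Sum>b<d. V2' l b * c nn mm x l b))^2)"
  proof -
    have "(\<Sum>k<d. \<Sum>l<d. \<Sum>b'<d. \<Sum>b<d. \<Sum>a1<d. \<Sum>s<d. \<Sum>t<d.
       V2 (mkB l) (mkB b) * cnj (V2 (mkB k) (mkB b')) * Mi (mkM a1 k s) (mkM a1 l t) * \<rho> (mkAB t b) (mkAB s b'))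
      = (\<Sum>k<d. \<Sum>l<d. \<Sum>b'<d. \<Sum>b<d. \<Sum>a1<d. \<Sum>s<d. \<Sum>t<d. \<Sum>nn<n1. \<Sum>mm<n2.
         V2' l b * cnj (V2' k b') * (w nn a1 k s * cnj (w nn a1 l t)) * (ph mm t b * cnj (ph mm s b')))"
      by (simp add: Md Rd V2'_def sum_distrib_left sum_distrib_right mult_ac)
    also have "\<dots> = (\<Sum>nn<n1. \<Sum>mm<n2. \<Sum>a1<d. \<Sum>k<d. \<Sum>l<d. \<Sum>b'<d. \<Sum>b<d. \<Sum>s<d. \<Sum>t<d.
         V2' l b * cnj (V2' k b') * (w nn a1 k s * cnj (w nn a1 l t)) * (ph mm t b * cnj (ph mm s b')))"
      by (rule perm9)
    also have "\<dots> = (\<Sum>nn<n1. \<Sum>mm<n2. \<Sum>x<d. (\<Sum>l<d. \<Sum>b<d. V2' l b * c nn mm x l b) * cnj (\<Sum>l<d. \<Sum>b<d. V2' l b * c nn mm x l b))"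
      by (simp add: c_def sum_distrib_left sum_distrib_right cnj_sum mult_ac)
    also have "\<dots> = of_real (\<Sum>nn<n1. \<Sum>mm<n2. \<Sum>x<d. (cmod (\<Sum>l<d. \<Sum>b<d. V2' l b * c nn mm x l b))^2)"
      unfolding of_real_sum cmod_sq_eq ..
    finally show ?thesis .
  qed
  have E3: "(\<Sum>a1<d. \<Sum>a2<d. \<Sum>b<d. \<Sum>s<d. \<Sum>t<d.
       Mi (mkM a1 a2 s) (mkM a1 a2 t) * \<rho> (mkAB t b) (mkAB s b))
     = of_real (\<Sum>nn<n1. \<Sum>mm<n2. \<Sum>a1<d. \<Sum>a2<d. \<Sum>b<d. (cmod (c nn mm a1 a2 b))^2)"
  proof -
    have "(\<Sum>a1<d. \<Sum>a2<d. \<Sum>b<d. \<Sum>s<d. \<Sum>t<d.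
       Mi (mkM a1 a2 s) (mkM a1 a2 t) * \<rho> (mkAB t b) (mkAB s b))
      = (\<Sum>a1<d. \<Sum>a2<d. \<Sum>b<d. \<Sum>s<d. \<Sum>t<d. \<Sum>nn<n1. \<Sum>mm<n2.
          (w nn a1 a2 s * cnj (w nn a1 a2 t)) * (ph mm t b * cnj (ph mm s b)))"
      by (simp add: Md Rd sum_distrib_left sum_distrib_right mult_ac)
    also have "\<dots> = (\<Sum>nn<n1. \<Sum>mm<n2. \<Sum>a1<d. \<Sum>a2<d. \<Sum>b<d. \<Sum>s<d. \<Sum>t<d.
          (w nn a1 a2 s * cnj (w nn a1 a2 t)) * (ph mm t b * cnj (ph mm s b)))"
      by (rule perm7)
    also have "\<dots> = (\<Sum>nn<n1. \<Sum>mm<n2. \<Sum>a1<d. \<Sum>a2<d. \<Sum>b<d. c nn mm a1 a2 b * cnj (c nn mm a1 a2 b))"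
      by (simp add: c_def sum_distrib_left sum_distrib_right cnj_sum mult_ac)
    also have "\<dots> = of_real (\<Sum>nn<n1. \<Sum>mm<n2. \<Sum>a1<d. \<Sum>a2<d. \<Sum>b<d. (cmod (c nn mm a1 a2 b))^2)"
      unfolding of_real_sum cmod_sq_eq ..
    finally show ?thesis .
  qed
  define X1 where "X1 = (\<Sum>nn<n1. \<Sum>mm<n2. \<Sum>x<d. (cmod (\<Sum>l<d. \<Sum>b<d. V1' l b * c nn mm l x b))^2)"
  define X2 where "X2 = (\<Sum>nn<n1. \<Sum>mm<n2. \<Sum>x<d. (cmod (\<Sum>l<d. \<Sum>b<d. V2' l b * c nn mm x l b))^2)"
  define Y where "Y = (\<Sum>nn<n1. \<Sum>mm<n2. \<Sum>a1<d. \<Sum>a2<d. \<Sum>b<d. (cmod (c nn mm a1 a2 b))^2)"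
  have VV: "\<And>k l. k < d \<Longrightarrow> l < d \<Longrightarrow> (\<Sum>b<d. V1' k b * cnj (V1' l b)) = (if k = l then 1 else 0)"
    unfolding V1'_def using unit_rows[OF u1] by simp
  have WW: "\<And>b b'. b < d \<Longrightarrow> b' < d \<Longrightarrow> (\<Sum>x<d. cnj (V2' x b) * V2' x b') = (if b = b' then 1 else 0)"
    unfolding V2'_def using unit_cols[OF u2] by simp
  have XY: "X1 + X2 \<le> (real d + 1) * Y"
  proof -
    have "X1 + X2 = (\<Sum>nn<n1. \<Sum>mm<n2. (\<Sum>x<d. (cmod (\<Sum>l<d. \<Sum>b<d. V1' l b * c nn mm l x b))^2)
        + (\<Sum>x<d. (cmod (\<Sum>l<d. \<Sum>b<d. V2' l b * c nn mm x l b))^2))"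
      unfolding X1_def X2_def by (simp add: sum.distrib)
    also have "\<dots> \<le> (\<Sum>nn<n1. \<Sum>mm<n2. (real d + 1) * (\<Sum>a1<d. \<Sum>a2<d. \<Sum>b<d. (cmod (c nn mm a1 a2 b))^2))"
      by (intro sum_mono monogamy VV WW) auto
    also have "\<dots> = (real d + 1) * Y" unfolding Y_def by (simp add: sum_distrib_left)
    finally show ?thesis .
  qed
  have "1/(of_nat d)^3 * complex_of_real X1 + 1/(of_nat d)^3 * complex_of_real X2
      \<le> (of_nat d + 1) / (of_nat d)^3 * complex_of_real Y"
  proof -
    have "1/(of_nat d)^3 * complex_of_real X1 + 1/(of_nat d)^3 * complex_of_real X2 = complex_of_real ((X1 + X2) / real d ^ 3)"
      by (simp add: add_divide_distrib)
    moreover have "(of_nat d + 1) / (of_nat d)^3 * complex_of_real Y = complex_of_real ((real d + 1) * Y / real d ^ 3)"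
      by (simp add: field_simps)
    moreover have "(X1 + X2) / real d ^ 3 \<le> (real d + 1) * Y / real d ^ 3"
      using XY d0 by (simp add: divide_right_mono)
    ultimately show ?thesis by (simp add: less_eq_complex_def)
  qed
  then show ?thesis unfolding E1 E2 E3 X1_def X2_def Y_def .
qed

lemma perm6:
  fixes F :: "nat \<Rightarrow> nat \<Rightarrow> nat \<Rightarrow> nat \<Rightarrow> nat \<Rightarrow> nat \<Rightarrow> 'a::comm_monoid_add"
  shows "(\<Sum>i\<in>I. \<Sum>a1\<in>D. \<Sum>a2\<in>D. \<Sum>b\<in>D. \<Sum>s\<in>D. \<Sum>t\<in>D. F i a1 a2 b s t)
       = (\<Sum>a1\<in>D. \<Sum>a2\<in>D. \<Sum>b\<in>D. \<Sum>s\<in>D. \<Sum>t\<in>D. \<Sum>i\<in>I. F i a1 a2 b s t)"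
  apply (simp add: sum.cartesian_product)
  apply (rule sum.reindex_bij_witness[where i="\<lambda>(a1,a2,b,s,t,i). (i,a1,a2,b,s,t)"
        and j="\<lambda>(i,a1,a2,b,s,t). (a1,a2,b,s,t,i)"])
  apply auto
  done

lemma R_sum:
  assumes pv: "povm d {A1, A2, At} K M" and dens: "density d {At, B} \<rho>"
  shows "(\<Sum>i=1..K. \<Sum>a1<d. \<Sum>a2<d. \<Sum>b<d. \<Sum>s<d. \<Sum>t<d.
       M i (mkM a1 a2 s) (mkM a1 a2 t) * \<rho> (mkAB t b) (mkAB s b)) = (of_nat d)^2"
proof -
  have tr: "(\<Sum>t<d. \<Sum>b<d. \<rho> (mkAB t b) (mkAB t b)) = 1"
    using dens by (simp add: density_def qtrace_def sum_cfgs_insert upd_mkAB)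
  have pvm: "(\<Sum>i=1..K. M i (mkM a1 a2 s) (mkM a1 a2 t)) = (if s = t then 1 else 0)"
    if "a1 < d" "a2 < d" "s < d" "t < d" for a1 a2 s t
    using pv that mkM_in by (simp add: povm_def ident_def mkM_eq_iff)
  have "(\<Sum>i=1..K. \<Sum>a1<d. \<Sum>a2<d. \<Sum>b<d. \<Sum>s<d. \<Sum>t<d.
       M i (mkM a1 a2 s) (mkM a1 a2 t) * \<rho> (mkAB t b) (mkAB s b))
     = (\<Sum>a1<d. \<Sum>a2<d. \<Sum>b<d. \<Sum>s<d. \<Sum>t<d. \<Sum>i=1..K.
       M i (mkM a1 a2 s) (mkM a1 a2 t) * \<rho> (mkAB t b) (mkAB s b))"
    by (rule perm6)
  also have "\<dots> = (\<Sum>a1<d. \<Sum>a2<d. \<Sum>b<d. \<Sum>s<d. \<Sum>t<d.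
       (if s = t then 1 else 0) * \<rho> (mkAB t b) (mkAB s b))"
    by (simp add: pvm[unfolded One_nat_def] flip: sum_distrib_right)
  also have "\<dots> = (\<Sum>a1<d. \<Sum>a2<d. \<Sum>b<d. \<Sum>s<d. \<rho> (mkAB s b) (mkAB s b))"
    by (simp add: if0_mult_left sum_delta_lt2 cong: if_cong)
  also have "\<dots> = (of_nat d)^2 * (\<Sum>b<d. \<Sum>s<d. \<rho> (mkAB s b) (mkAB s b))"
    by (simp add: power2_eq_square)
  also have "(\<Sum>b<d. \<Sum>s<d. \<rho> (mkAB s b) (mkAB s b)) = 1"
    using tr sum.swap[of "\<lambda>b s. \<rho> (mkAB s b) (mkAB s b)" "{..<d}" "{..<d}"] by simp
  finally show ?thesis by simp
qed

theorem proposition2: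
  fixes d K :: nat and \<rho> :: qop and M :: "nat \<Rightarrow> qop" and U :: "nat \<Rightarrow> nat \<Rightarrow> qop"
  assumes "d \<ge> 2"
    and "density d {At, B} \<rho>"
    and "K \<ge> 1"
    and "povm d {A1, A2, At} K M"
    and "\<forall>i\<in>{1..K}. \<forall>j\<in>{1,2}. unitary_op d {B} (U i j)"
  shows "P_succ d \<rho> K M U \<le> complex_of_real ((real d + 1) / (2 * real d))"
proof -
  define T1 where "T1 = (\<lambda>i. 1/(of_nat d)^3 * (\<Sum>k<d. \<Sum>l<d. \<Sum>b'<d. \<Sum>b<d. \<Sum>a2<d. \<Sum>s<d. \<Sum>t<d.
       U i 1 (mkB l) (mkB b) * cnj (U i 1 (mkB k) (mkB b')) * M i (mkM k a2 s) (mkM l a2 t) * \<rho> (mkAB t b) (mkAB s b')))"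
  define T2 where "T2 = (\<lambda>i. 1/(of_nat d)^3 * (\<Sum>k<d. \<Sum>l<d. \<Sum>b'<d. \<Sum>b<d. \<Sum>a1<d. \<Sum>s<d. \<Sum>t<d.
       U i 2 (mkB l) (mkB b) * cnj (U i 2 (mkB k) (mkB b')) * M i (mkM a1 k s) (mkM a1 l t) * \<rho> (mkAB t b) (mkAB s b')))"
  define R where "R = (\<lambda>i. (\<Sum>a1<d. \<Sum>a2<d. \<Sum>b<d. \<Sum>s<d. \<Sum>t<d.
       M i (mkM a1 a2 s) (mkM a1 a2 t) * \<rho> (mkAB t b) (mkAB s b)))"
  have d0: "d > 0" using assms(1) by simp
  have P: "P_succ d \<rho> K M U = 1/2 * (\<Sum>i=1..K. T1 i + T2 i)"
    unfolding P_succ_def T1_def T2_def by (simp add: term1[unfolded One_nat_def] term2 sum.distrib)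
  have each: "T1 i + T2 i \<le> (of_nat d + 1) / (of_nat d)^3 * R i" if "i \<in> {1..K}" for i
    unfolding T1_def T2_def R_def
  proof (rule per_i[OF d0])
    show "positive d {A1, A2, At} (M i)" using assms(4) that by (simp add: povm_def)
    show "positive d {At, B} \<rho>" using assms(2) by (simp add: density_def)
    show "unitary_op d {B} (U i 1)" "unitary_op d {B} (U i 2)" using assms(5) that by auto
  qed
  have "(\<Sum>i=1..K. T1 i + T2 i) \<le> (\<Sum>i=1..K. (of_nat d + 1) / (of_nat d)^3 * R i)"
    by (rule sum_mono) (rule each)
  also have "\<dots> = (of_nat d + 1) / (of_nat d)^3 * (\<Sum>i=1..K. R i)"
    by (rule sum_distrib_left[symmetric])
  also have "(\<Sum>i=1..K. R i) = (of_nat d)^2"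
    unfolding R_def by (rule R_sum[OF assms(4,2)])
  finally have "P_succ d \<rho> K M U \<le> 1/2 * ((of_nat d + 1) / (of_nat d)^3 * (of_nat d)^2)"
    unfolding P by (rule mult_left_mono) (simp add: less_eq_complex_def)
  also have "1/2 * ((of_nat d + 1) / (of_nat d)^3 * (of_nat d)^2) = complex_of_real ((real d + 1) / (2 * real d))"
    using d0 by (simp add: field_simps power2_eq_square power3_eq_cube)
  finally show ?thesis .
qed


end
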